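(* Let $n\geq 3$ and $k\geq 2$ be integers and let $LCG(n,k)$ be the layer cycle graph with parameters $n,k$. Then the minimum cardinality of a strong resolving set of $LCG(n,k)$ is $sdim(LCG(n,k))=\lceil \tfrac{n}{2}\rceil\, n(n-1)^{k-2}-1$.
   Context: All graphs are simple and connected; $d(u,v)$ is the shortest-path distance. For vertices $u,v$, $I_G[u,v]$ is the set of vertices lying on some shortest $u$–$v$ path. A vertex $w$ strongly resolves $u$ and $v$ if $v\in I_G[u,w]$ or $u\in I_G[v,w]$. A set $R$ of vertices is a strong resolving set of $G$ if every two distinct vertices of $G$ are strongly resolved by some vertex of $R$; $sdim(G)$ is the minimum size of a strong resolving set. The layer cycle graph $LCG(n,k)$ ($n\geq 3$, $k\geq 2$) is constructed as follows. Its vertex set is partitioned into layers $U_1,\dots,U_k$. Layer $U_1$ is a cycle $C_n$ on vertices $1,\dots,n$. For $2\leq p\leq k$, layer $U_p$ consists of $n(n-1)^{p-2}$ vertex-disjoint cycles of length $n$, each with a distinguished vertex called its head vertex. Each vertex of $U_1$ is joined by an edge to the head vertex of exactly one cycle of $U_2$ (distinct vertices to distinct cycles). For $2\leq p<k$, each of the $n-1$ non-head vertices of each cycle of $U_p$ is joined by an edge to the head vertex of exactly one cycle of $U_{p+1}$, in such a way that every cycle of $U_{p+1}$ has its head joined to exactly one such vertex. There are no other edges. Thus $LCG(n,k)$ has $n+\sum_{p=2}^{k}n^2(n-1)^{p-2}$ vertices. *)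

theory Defs
  imports Main
begin

definition is_walk :: "('a \<Rightarrow> 'a \<Rightarrow> bool) \<Rightarrow> 'a list \<Rightarrow> bool" where
  "is_walk E p \<longleftrightarrow> p \<noteq> [] \<and> (\<forall>i. Suc i < length p \<longrightarrow> E (p ! i) (p ! Suc i))"

definition gdist :: "('a \<Rightarrow> 'a \<Rightarrow> bool) \<Rightarrow> 'a \<Rightarrow> 'a \<Rightarrow> nat" where
  "gdist E u v = (LEAST m. \<exists>p. is_walk E p \<and> hd p = u \<and> last p = v \<and> length p = Suc m)"

definition interval :: "'a set \<Rightarrow> ('a \<Rightarrow> 'a \<Rightarrow> bool) \<Rightarrow> 'a \<Rightarrow> 'a \<Rightarrow> 'a set" where
  "interval V E u v = {w \<in> V. gdist E u w + gdist E w v = gdist E u v}"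

definition strongly_resolves :: "'a set \<Rightarrow> ('a \<Rightarrow> 'a \<Rightarrow> bool) \<Rightarrow> 'a \<Rightarrow> 'a \<Rightarrow> 'a \<Rightarrow> bool" where
  "strongly_resolves V E w u v \<longleftrightarrow> v \<in> interval V E u w \<or> u \<in> interval V E v w"

definition strong_resolving_set :: "'a set \<Rightarrow> ('a \<Rightarrow> 'a \<Rightarrow> bool) \<Rightarrow> 'a set \<Rightarrow> bool" where
  "strong_resolving_set V E R \<longleftrightarrow> R \<subseteq> V \<and>
     (\<forall>u\<in>V. \<forall>v\<in>V. u \<noteq> v \<longrightarrow> (\<exists>w\<in>R. strongly_resolves V E w u v))"

definition sdim :: "'a set \<Rightarrow> ('a \<Rightarrow> 'a \<Rightarrow> bool) \<Rightarrow> nat" where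
  "sdim V E = Min {card R | R. strong_resolving_set V E R}"

text \<open>A vertex is a nonempty list of length p (its layer, 1 \<le> p \<le> k).
  Layer 1: [i] with i < n, the vertices of the cycle U_1 (numbered 0..n-1).
  A cycle of layer p \<ge> 2 is named by its attachment vertex xs (a vertex of layer p-1,
  which is any vertex of U_1 if p = 2, and a non-head vertex otherwise);
  its vertices are xs @ [j], j < n, with head xs @ [0].
  Hence entries strictly between the first and the last lie in {1..n-1}.\<close>
definition lcg_vert :: "nat \<Rightarrow> nat \<Rightarrow> nat list \<Rightarrow> bool" where
  "lcg_vert n k xs \<longleftrightarrow> 1 \<le> length xs \<and> length xs \<le> k \<and> hd xs < n \<and> last xs < n \<and>
     (\<forall>i. 0 < i \<and> i < length xs - 1 \<longrightarrow> 1 \<le> xs ! i \<and> xs ! i < n)"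

definition lcg_V :: "nat \<Rightarrow> nat \<Rightarrow> nat list set" where
  "lcg_V n k = {xs. lcg_vert n k xs}"

definition lcg_adj :: "nat \<Rightarrow> nat \<Rightarrow> nat list \<Rightarrow> nat list \<Rightarrow> bool" where
  "lcg_adj n k xs ys \<longleftrightarrow> lcg_vert n k xs \<and> lcg_vert n k ys \<and>
     ((length xs = length ys \<and> butlast xs = butlast ys \<and>
        (last ys = (last xs + 1) mod n \<or> last xs = (last ys + 1) mod n))
      \<or> (ys = xs @ [0] \<and> (length xs = 1 \<or> last xs \<noteq> 0))
      \<or> (xs = ys @ [0] \<and> (length ys = 1 \<or> last ys \<noteq> 0)))"

end

theory Submission
  imports Defs
begin

definition cd :: "nat \<Rightarrow> nat \<Rightarrow> nat \<Rightarrow> nat" where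
  "cd n a b = min (if a \<le> b then b - a else a - b) (n - (if a \<le> b then b - a else a - b))"

lemma cd_sym: "cd n a b = cd n b a" unfolding cd_def by auto
lemma cd_self[simp]: "cd n a a = 0" unfolding cd_def by auto
lemma cd_cases: "(a \<le> b \<and> 2*b \<le> n + 2*a \<and> cd n a b + a = b) \<or> (a \<le> b \<and> 2*b > n+2*a \<and> cd n a b + b = n + a)
  \<or> (b < a \<and> 2*a \<le> n + 2*b \<and> cd n a b + b = a) \<or> (b < a \<and> 2*a > n + 2*b \<and> cd n a b + a = n + b)"
  if "a < n" "b < n"
  using that unfolding cd_def min_def by auto

lemma cd_tri: assumes "a < n" "b < n" "c < n" shows "cd n a c \<le> cd n a b + cd n b c"
  using cd_cases[OF assms(1,2)] cd_cases[OF assms(2,3)] cd_cases[OF assms(1,3)] by (elim disjE conjE; linarith)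
lemma cd_zero: assumes "a < n" "b < n" "cd n a b = 0" shows "a = b"
  using cd_cases[OF assms(1,2)] assms by (elim disjE conjE; linarith)
lemma cd_le_half: assumes "a < n" "b < n" shows "2 * cd n a b \<le> n"
  using cd_cases[OF assms(1,2)] by (elim disjE conjE; linarith)
lemma cd_le_half': "a < n \<Longrightarrow> b < n \<Longrightarrow> cd n a b \<le> n div 2"
  using cd_le_half[of a n b] by linarith

definition sc :: "nat \<Rightarrow> nat \<Rightarrow> nat" where "sc n a = (if a + 1 = n then 0 else a + 1)"
definition pr :: "nat \<Rightarrow> nat \<Rightarrow> nat" where "pr n a = (if a = 0 then n - 1 else a - 1)"

lemma sc_mod: "a < n \<Longrightarrow> (a + 1) mod n = sc n a" unfolding sc_def by auto
lemma pr_sc: "a < n \<Longrightarrow> sc n (pr n a) = a" unfolding sc_def pr_def by auto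
lemma sc_lt: "a < n \<Longrightarrow> sc n a < n" unfolding sc_def by auto
lemma pr_lt: "a < n \<Longrightarrow> pr n a < n" unfolding pr_def by auto
lemma sc_cases: "a < n \<Longrightarrow> (a + 1 = n \<and> sc n a = 0) \<or> (a + 1 < n \<and> sc n a = a + 1)" unfolding sc_def by auto
lemma pr_cases: "a < n \<Longrightarrow> (a = 0 \<and> pr n a + 1 = n) \<or> (0 < a \<and> pr n a + 1 = a)" unfolding pr_def by auto
lemma cd_sc: assumes "3 \<le> n" "a < n" shows "cd n a (sc n a) = 1"
  using sc_cases[OF assms(2)] cd_cases[OF assms(2) sc_lt[OF assms(2)]] assms by (elim disjE conjE; linarith)
lemma cd_pr: assumes "3 \<le> n" "a < n" shows "cd n a (pr n a) = 1"
  using pr_cases[OF assms(2)] cd_cases[OF assms(2) pr_lt[OF assms(2)]] assms by (elim disjE conjE; linarith)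

lemma cdA: "a \<le> b \<Longrightarrow> 2*b \<le> n + 2*a \<Longrightarrow> cd n a b = b - a" unfolding cd_def by auto
lemma cdB: "a \<le> b \<Longrightarrow> n + 2*a \<le> 2*b \<Longrightarrow> b < n \<Longrightarrow> cd n a b = n + a - b" unfolding cd_def by auto
lemma cdA': "b \<le> a \<Longrightarrow> 2*a \<le> n + 2*b \<Longrightarrow> cd n a b = a - b" unfolding cd_def by auto
lemma cdB': "b \<le> a \<Longrightarrow> n + 2*b \<le> 2*a \<Longrightarrow> a < n \<Longrightarrow> cd n a b = n + b - a" unfolding cd_def by auto

lemma cd_step_toward: assumes "3 \<le> n" "a < n" "b < n" "a \<noteq> b" shows
   "cd n (sc n a) b + 1 = cd n a b \<or> cd n (pr n a) b + 1 = cd n a b"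
proof -
  consider (c1) "a < b" "2*b \<le> n + 2*a" | (c2) "a < b" "2*b > n + 2*a" "a = 0" | (c3) "a < b" "2*b > n + 2*a" "a > 0"
   | (c4) "b < a" "2*a \<le> n + 2*b" | (c5) "b < a" "2*a > n + 2*b" "a + 1 = n" | (c6) "b < a" "2*a > n + 2*b" "a + 1 < n"
    using assms by linarith
  then show ?thesis
  proof cases
    case c1 note h = c1
    then have "sc n a = a + 1" using assms unfolding sc_def by auto
    moreover have "cd n (a+1) b = b - (a+1)" by (rule cdA) (use h assms in arith)+
    moreover have "cd n a b = b - a" by (rule cdA) (use h assms in arith)+
    ultimately show ?thesis using h assms by (simp; arith?)
  next
    case c2 note h = c2
    then have "pr n a = n - 1" using assms unfolding pr_def by auto
    moreover have "cd n (n-1) b = (n-1) - b" by (rule cdA') (use h assms in arith)+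
    moreover have "cd n a b = n + a - b" by (rule cdB) (use h assms in arith)+
    ultimately show ?thesis using h assms by (simp; arith?)
  next
    case c3 note h = c3
    then have "pr n a = a - 1" using assms unfolding pr_def by auto
    moreover have "cd n (a-1) b = n + (a-1) - b" by (rule cdB) (use h assms in arith)+
    moreover have "cd n a b = n + a - b" by (rule cdB) (use h assms in arith)+
    ultimately show ?thesis using h assms by (simp; arith?)
  next
    case c4 note h = c4
    then have "pr n a = a - 1" using assms unfolding pr_def by auto
    moreover have "cd n (a-1) b = (a-1) - b" by (rule cdA') (use h assms in arith)+
    moreover have "cd n a b = a - b" by (rule cdA') (use h assms in arith)+
    ultimately show ?thesis using h assms by (simp; arith?)
  next
    case c5 note h = c5
    then have "sc n a = 0" using assms unfolding sc_def by auto
    moreover have "cd n 0 b = b" by (rule cdA[THEN trans]) (use h assms in arith)+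
    moreover have "cd n a b = n + b - a" by (rule cdB') (use h assms in arith)+
    ultimately show ?thesis using h assms by (simp; arith?)
  next
    case c6 note h = c6
    then have "sc n a = a + 1" using assms unfolding sc_def by auto
    moreover have "cd n (a+1) b = n + b - (a+1)" by (rule cdB') (use h assms in arith)+
    moreover have "cd n a b = n + b - a" by (rule cdB') (use h assms in arith)+
    ultimately show ?thesis using h assms by (simp; arith?)
  qed
qed

lemma cd_step_away: assumes "3 \<le> n" "a < n" "b < n" "2 * cd n a b + 1 < n" shows
   "cd n a (sc n b) = cd n a b + 1 \<or> cd n a (pr n b) = cd n a b + 1"
proof -
  have "(a \<le> b \<and> 2*b \<le> n + 2*a \<and> b + 1 < n) \<or> (a \<le> b \<and> 2*b \<le> n + 2*a \<and> b + 1 = n)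
    \<or> (a < b \<and> 2*b > n + 2*a \<and> 2*b > n + 2*a + 2) \<or> (a < b \<and> 2*b > n + 2*a \<and> 2*b \<le> n + 2*a + 2)
    \<or> (b < a \<and> 2*a \<le> n + 2*b \<and> b > 0) \<or> (b < a \<and> 2*a \<le> n + 2*b \<and> b = 0)
    \<or> (b < a \<and> 2*a > n + 2*b \<and> 2*a > n + 2*(b+1)) \<or> (b < a \<and> 2*a > n + 2*b \<and> 2*a \<le> n + 2*(b+1))"
    using assms by (cases "a \<le> b"; cases "b = a"; cases "2*b \<le> n + 2*a"; cases "2*a \<le> n + 2*b"; auto)
  then consider (c1) "a \<le> b" "2*b \<le> n + 2*a" "b + 1 < n" | (c2) "a \<le> b" "2*b \<le> n + 2*a" "b + 1 = n"
    | (c3) "a < b" "2*b > n + 2*a" "2*(b-1) > n + 2*a" | (c4) "a < b" "2*b > n + 2*a" "2*(b-1) \<le> n + 2*a"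
    | (c5) "b < a" "2*a \<le> n + 2*b" "b > 0" | (c6) "b < a" "2*a \<le> n + 2*b" "b = 0"
    | (c7) "b < a" "2*a > n + 2*b" "2*a > n + 2*(b+1)" | (c8) "b < a" "2*a > n + 2*b" "2*a \<le> n + 2*(b+1)"
    by (elim disjE conjE) (simp_all add: algebra_simps)
  then show ?thesis
  proof cases
    case c1 note h = c1
    then have "sc n b = b + 1" using assms unfolding sc_def by auto
    moreover have "cd n a b = b - a" by (rule cdA) (use h assms in arith)+
    moreover have "cd n a (b+1) = (b+1) - a" by (rule cdA) (use h assms \<open>cd n a b = b - a\<close> in arith)+
    ultimately show ?thesis using h assms by (simp; arith?)
  next
    case c2 note h = c2
    then have "sc n b = 0" using assms unfolding sc_def by auto
    moreover have "cd n a b = b - a" by (rule cdA) (use h assms in arith)+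
    moreover have "cd n a 0 = n + 0 - a" by (rule cdB') (use h assms \<open>cd n a b = b - a\<close> in arith)+
    ultimately show ?thesis using h assms by (simp; arith?)
  next
    case c3 note h = c3
    then have "pr n b = b - 1" using assms unfolding pr_def by auto
    moreover have "cd n a b = n + a - b" by (rule cdB) (use h assms in arith)+
    moreover have "cd n a (b-1) = n + a - (b-1)" by (rule cdB) (use h assms in arith)+
    ultimately show ?thesis using h assms by (simp; arith?)
  next
    case c4 note h = c4
    then have "pr n b = b - 1" using assms unfolding pr_def by auto
    moreover have "cd n a b = n + a - b" by (rule cdB) (use h assms in arith)+
    moreover have "cd n a (b-1) = (b-1) - a" by (rule cdA) (use h assms in arith)+
    ultimately show ?thesis using h assms by (simp; arith?)
  next
    case c5 note h = c5
    then have "pr n b = b - 1" using assms unfolding pr_def by auto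
    moreover have "cd n a b = a - b" by (rule cdA') (use h assms in arith)+
    moreover have "cd n a (b-1) = a - (b-1)" by (rule cdA') (use h assms \<open>cd n a b = a - b\<close> in arith)+
    ultimately show ?thesis using h assms by (simp; arith?)
  next
    case c6 note h = c6
    then have "pr n b = n - 1" using assms unfolding pr_def by auto
    moreover have "cd n a b = a - b" by (rule cdA') (use h assms in arith)+
    moreover have "cd n a (n-1) = n + a - (n-1)" by (rule cdB) (use h assms \<open>cd n a b = a - b\<close> in arith)+
    ultimately show ?thesis using h assms by (simp; arith?)
  next
    case c7 note h = c7
    then have "sc n b = b + 1" using assms unfolding sc_def by auto
    moreover have "cd n a b = n + b - a" by (rule cdB') (use h assms in arith)+
    moreover have "cd n a (b+1) = n + (b+1) - a" by (rule cdB') (use h assms in arith)+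
    ultimately show ?thesis using h assms by (simp; arith?)
  next
    case c8 note h = c8
    then have "sc n b = b + 1" using assms unfolding sc_def by auto
    moreover have "cd n a b = n + b - a" by (rule cdB') (use h assms in arith)+
    moreover have "cd n a (b+1) = a - (b+1)" by (rule cdA') (use h assms in arith)+
    ultimately show ?thesis using h assms by (simp; arith?)
  qed
qed

fun W :: "nat \<Rightarrow> nat list \<Rightarrow> nat" where
  "W n [] = 0" | "W n (t # ts) = cd n 0 t + 1 + W n ts"

fun D :: "nat \<Rightarrow> nat list \<Rightarrow> nat list \<Rightarrow> nat" where
  "D n [] ys = W n ys"
| "D n (x # xs) [] = W n (x # xs)"
| "D n (x # xs) (y # ys) = (if x = y then D n xs ys else cd n x y + W n xs + W n ys)"

lemma W_append[simp]: "W n (xs @ ys) = W n xs + W n ys" by (induction xs) auto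
lemma D_Nil2[simp]: "D n xs [] = W n xs" by (cases xs) auto
lemma D_self[simp]: "D n xs xs = 0" by (induction xs) auto
lemma D_sym: "D n xs ys = D n ys xs"
  by (induction n xs ys rule: D.induct) (auto simp: cd_sym)
lemma D_prefix[simp]: "D n (p @ xs) (p @ ys) = D n xs ys" by (induction p) auto
lemma D_single: "D n [a] (y # ws) = cd n a y + W n ws" by auto

lemma D_snoc_out: "\<not> (\<exists>b rest. v = p @ b # rest) \<Longrightarrow> D n (p @ [t]) v = D n p v + cd n 0 t + 1"
proof (induction p arbitrary: v)
  case Nil then show ?case by (cases v) auto
next
  case (Cons x p)
  show ?case
  proof (cases v)
    case Nil then show ?thesis by simp
  next
    case (Cons y v')
    show ?thesis
    proof (cases "x = y")
      case True
      then have "\<not> (\<exists>b rest. v' = p @ b # rest)" using Cons.prems Cons by auto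
      then show ?thesis using Cons.IH Cons True by simp
    next
      case False then show ?thesis using Cons by simp
    qed
  qed
qed

lemma D_child: "D n (x @ [0]) w \<le> D n x w + 1 \<and> D n x w \<le> D n (x @ [0]) w + 1"
proof (induction x arbitrary: w)
  case Nil then show ?case by (cases w) (auto simp: cd_def)
next
  case (Cons z x)
  then show ?case by (cases w) (auto simp: cd_def)
qed

lemma D_cyc: "set w \<subseteq> {..<n} \<Longrightarrow> a < n \<Longrightarrow> b < n \<Longrightarrow> D n (p @ [a]) w \<le> D n (p @ [b]) w + cd n a b"
proof (induction p arbitrary: w)
  case Nil
  then show ?case
  proof (cases w)
    case Nil
    then show ?thesis using cd_tri[of 0 n b a] Nil.prems by (simp add: cd_sym)
  next
    case (Cons y ws)
    then have "y < n" using Nil.prems by auto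
    then show ?thesis using cd_tri[of a n b y] Nil.prems Cons by (simp add: cd_sym)
  qed
next
  case (Cons x p)
  then show ?case
  proof (cases w)
    case Nil
    then show ?thesis using cd_tri[of 0 n b a] Cons.prems by (simp add: cd_sym)
  next
    case (Cons y ws)
    then show ?thesis using Cons.IH[of ws] Cons.prems cd_tri[of 0 n b a] by (auto simp: cd_sym)
  qed
qed

lemma sc_Suc_mod: "a < n \<Longrightarrow> Suc a mod n = sc n a" using sc_mod by simp

lemma V_single: "lcg_vert n k [a] \<longleftrightarrow> a < n \<and> 1 \<le> k"
  unfolding lcg_vert_def by auto

lemma V_snoc: assumes "p \<noteq> []"
  shows "lcg_vert n k (p @ [a]) \<longleftrightarrow> lcg_vert n k p \<and> (length p = 1 \<or> last p \<noteq> 0) \<and> a < n \<and> length p < k"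
proof
  assume H: "lcg_vert n k (p @ [a])"
  have mid: "1 \<le> (p @ [a]) ! i \<and> (p @ [a]) ! i < n" if "0 < i" "i < length p" for i
    using H that unfolding lcg_vert_def by auto
  have hd: "hd p < n" using H assms unfolding lcg_vert_def by auto
  have lastp: "last p < n \<and> (length p = 1 \<or> last p \<noteq> 0)"
  proof (cases "length p = 1")
    case True
    then have "last p = hd p" by (cases p) auto
    then show ?thesis using hd True by auto
  next
    case False
    then have "0 < length p - 1" "length p - 1 < length p" using assms by (cases p; auto)+
    then have "1 \<le> p ! (length p - 1) \<and> p ! (length p - 1) < n" using mid[of "length p - 1"] by (simp add: nth_append)
    then show ?thesis using assms by (simp add: last_conv_nth)
  qed
  have "\<forall>i. 0 < i \<and> i < length p - 1 \<longrightarrow> 1 \<le> p ! i \<and> p ! i < n"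
    using mid by (auto simp: nth_append)
  then show "lcg_vert n k p \<and> (length p = 1 \<or> last p \<noteq> 0) \<and> a < n \<and> length p < k"
    using H hd lastp assms unfolding lcg_vert_def by (auto simp: Suc_le_eq)
next
  assume H: "lcg_vert n k p \<and> (length p = 1 \<or> last p \<noteq> 0) \<and> a < n \<and> length p < k"
  have "1 \<le> (p @ [a]) ! i \<and> (p @ [a]) ! i < n" if "0 < i" "i < length p" for i
  proof (cases "i < length p - 1")
    case True then show ?thesis using H that unfolding lcg_vert_def by (auto simp: nth_append)
  next
    case False
    then have "i = length p - 1" using that by auto
    then have "(p @ [a]) ! i = last p" using assms that by (simp add: nth_append last_conv_nth)
    moreover have "length p \<noteq> 1" using that by auto
    ultimately show ?thesis using H unfolding lcg_vert_def by auto
  qed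
  moreover have "0 < length p" using assms by simp
  ultimately show "lcg_vert n k (p @ [a])" using H assms unfolding lcg_vert_def
    by (auto simp: hd_append)
qed

lemma V_set: assumes "lcg_vert n k xs" shows "set xs \<subseteq> {..<n}"
proof
  fix x assume "x \<in> set xs"
  then obtain i where i: "i < length xs" "xs ! i = x" by (auto simp: in_set_conv_nth)
  have ne: "xs \<noteq> []" using i by auto
  consider "i = 0" | "i = length xs - 1" | "0 < i \<and> i < length xs - 1" using i by linarith
  then show "x \<in> {..<n}"
  proof cases
    case 1 then show ?thesis using assms i ne unfolding lcg_vert_def by (auto simp: hd_conv_nth)
  next
    case 2 then show ?thesis using assms i ne unfolding lcg_vert_def by (auto simp: last_conv_nth)
  next
    case 3 then show ?thesis using assms i unfolding lcg_vert_def by auto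
  qed
qed

lemma V_ne: "lcg_vert n k xs \<Longrightarrow> xs \<noteq> []" unfolding lcg_vert_def by auto
lemma V_len: "lcg_vert n k xs \<Longrightarrow> length xs \<le> k" unfolding lcg_vert_def by auto

lemma V_prefix: "lcg_vert n k (p @ t # rest) \<Longrightarrow> p \<noteq> [] \<Longrightarrow> lcg_vert n k (p @ [t])"
proof (induction rest rule: rev_induct)
  case Nil then show ?case by simp
next
  case (snoc z r)
  have "lcg_vert n k ((p @ t # r) @ [z])" using snoc.prems by simp
  then have "lcg_vert n k (p @ t # r)" using V_snoc[of "p @ t # r"] by auto
  then show ?case using snoc by auto
qed

lemma adj_sym: "lcg_adj n k x y = lcg_adj n k y x" unfolding lcg_adj_def by auto

lemma adj_cases: assumes "lcg_adj n k x y"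
  shows "lcg_vert n k x \<and> lcg_vert n k y \<and> ((\<exists>p a b. x = p @ [a] \<and> y = p @ [b] \<and> a < n \<and> b < n \<and> (b = sc n a \<or> a = sc n b))
     \<or> y = x @ [0] \<or> x = y @ [0])"
proof -
  have vx: "lcg_vert n k x" and vy: "lcg_vert n k y" using assms unfolding lcg_adj_def by auto
  have ne: "x \<noteq> []" "y \<noteq> []" using vx vy V_ne by auto
  have lt: "last x < n" "last y < n" using vx vy unfolding lcg_vert_def by auto
  { assume c: "length x = length y \<and> butlast x = butlast y \<and> (last y = (last x + 1) mod n \<or> last x = (last y + 1) mod n)"
    have "x = butlast x @ [last x]" using ne(1) by (rule append_butlast_last_id[symmetric])
    moreover have "y = butlast x @ [last y]" using ne(2) c append_butlast_last_id[symmetric] by metis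
    moreover have "last y = sc n (last x) \<or> last x = sc n (last y)" using c lt sc_Suc_mod by auto
    ultimately have "\<exists>p a b. x = p @ [a] \<and> y = p @ [b] \<and> a < n \<and> b < n \<and> (b = sc n a \<or> a = sc n b)"
      using lt by blast }
  then show ?thesis using assms vx vy unfolding lcg_adj_def by blast
qed

lemma adj_cyc: assumes "lcg_vert n k (p @ [a])" "b < n" "b = sc n a \<or> a = sc n b"
  shows "lcg_adj n k (p @ [a]) (p @ [b])"
proof -
  have a: "a < n" using V_set[OF assms(1)] by auto
  have "lcg_vert n k (p @ [b])"
  proof (cases "p = []")
    case True then show ?thesis using assms V_single by auto
  next
    case False then show ?thesis using assms V_snoc by auto
  qed
  then show ?thesis using assms a unfolding lcg_adj_def by (auto simp: sc_Suc_mod)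
qed

lemma adj_child: assumes "lcg_vert n k x" "lcg_vert n k (x @ [0])"
  shows "lcg_adj n k x (x @ [0])"
proof -
  have "x \<noteq> []" using assms V_ne by auto
  then have "length x = 1 \<or> last x \<noteq> 0" using assms V_snoc by auto
  then show ?thesis using assms unfolding lcg_adj_def by auto
qed

lemma D_lip: assumes "lcg_adj n k x y" "set w \<subseteq> {..<n}" "3 \<le> n"
  shows "D n y w \<le> D n x w + 1"
proof -
  have "(\<exists>p a b. x = p @ [a] \<and> y = p @ [b] \<and> a < n \<and> b < n \<and> (b = sc n a \<or> a = sc n b))
     \<or> y = x @ [0] \<or> x = y @ [0]" using adj_cases[OF assms(1)] by blast
  then show ?thesis
  proof (elim disjE)
    assume "\<exists>p a b. x = p @ [a] \<and> y = p @ [b] \<and> a < n \<and> b < n \<and> (b = sc n a \<or> a = sc n b)"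
    then obtain p a b where h: "x = p @ [a]" "y = p @ [b]" "a < n" "b < n" "b = sc n a \<or> a = sc n b" by blast
    have "cd n b a = 1" using h cd_sc[OF assms(3)] cd_sym by metis
    then show ?thesis using D_cyc[OF assms(2) h(4) h(3), of p] h by simp
  next
    assume "y = x @ [0]" then show ?thesis using D_child by auto
  next
    assume "x = y @ [0]" then show ?thesis using D_child by auto
  qed
qed


lemma D_prefix0: "D n p (p @ ys) = W n ys" using D_prefix[of n p "[]" ys] by simp
lemma D_prefix0': "D n (p @ ys) p = W n ys" using D_prefix0 D_sym by metis

lemma is_walk_Cons2: "is_walk E (x # y # ys) \<longleftrightarrow> E x y \<and> is_walk E (y # ys)"
proof
  assume H: "is_walk E (x # y # ys)"
  have "Suc 0 < length (x # y # ys) \<longrightarrow> E ((x # y # ys) ! 0) ((x # y # ys) ! Suc 0)"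
    using H unfolding is_walk_def by blast
  then have "E x y" by simp
  moreover have "is_walk E (y # ys)" unfolding is_walk_def
  proof (intro conjI allI impI)
    fix i assume "Suc i < length (y # ys)"
    moreover have "Suc (Suc i) < length (x # y # ys) \<longrightarrow> E ((x # y # ys) ! Suc i) ((x # y # ys) ! Suc (Suc i))"
      using H unfolding is_walk_def by blast
    ultimately show "E ((y # ys) ! i) ((y # ys) ! Suc i)" by simp
  qed simp
  ultimately show "E x y \<and> is_walk E (y # ys)" by simp
next
  assume H: "E x y \<and> is_walk E (y # ys)"
  show "is_walk E (x # y # ys)" unfolding is_walk_def
  proof (intro conjI allI impI)
    fix i assume i: "Suc i < length (x # y # ys)"
    show "E ((x # y # ys) ! i) ((x # y # ys) ! Suc i)"
    proof (cases i)
      case 0 then show ?thesis using H by simp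
    next
      case (Suc j) then show ?thesis using H i unfolding is_walk_def by auto
    qed
  qed simp
qed

context
  fixes n k :: nat
  assumes n3: "3 \<le> n" and k2: "2 \<le> k"
begin

lemma step: assumes vu: "lcg_vert n k u" and vv: "lcg_vert n k v" and ne: "u \<noteq> v"
  shows "\<exists>y. lcg_adj n k u y \<and> D n y v + 1 = D n u v"
proof (cases "\<exists>t rest. v = u @ t # rest")
  case True
  then obtain t rest where v: "v = u @ t # rest" by blast
  have une: "u \<noteq> []" using V_ne vu by auto
  have "lcg_vert n k (u @ [t])" using V_prefix vv v une by auto
  then have "lcg_vert n k (u @ [0])" using V_snoc une n3 by auto
  then have adj: "lcg_adj n k u (u @ [0])" using adj_child vu by auto
  have "D n (u @ [0]) v = cd n 0 t + W n rest" using v D_prefix[of n u "[0]" "t # rest"] D_single by simp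
  moreover have "D n u v = cd n 0 t + 1 + W n rest" using v D_prefix0 by simp
  ultimately show ?thesis using adj by auto
next
  case False
  have une: "u \<noteq> []" using V_ne vu by auto
  define p a where "p = butlast u" and "a = last u"
  have u: "u = p @ [a]" using une unfolding p_def a_def by simp
  have an: "a < n" using V_set[OF vu] u by auto
  show ?thesis
  proof (cases "\<exists>b rest. v = p @ b # rest")
    case True
    then obtain b rest where v: "v = p @ b # rest" by blast
    have bn: "b < n" using V_set[OF vv] v by auto
    have ab: "a \<noteq> b"
    proof
      assume "a = b"
      then have "v = u @ rest" using u v by simp
      then show False using False ne by (cases rest) auto
    qed
    have Dv: "D n (p @ [c]) v = cd n c b + W n rest" for c
      using v D_prefix[of n p "[c]" "b # rest"] D_single by simp
    from cd_step_toward[OF n3 an bn ab]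
    show ?thesis
    proof
      assume h: "cd n (sc n a) b + 1 = cd n a b"
      have "lcg_adj n k u (p @ [sc n a])" using adj_cyc[of n k p a "sc n a"] vu u sc_lt[OF an] by auto
      then show ?thesis using h Dv u by (intro exI[of _ "p @ [sc n a]"]) auto
    next
      assume h: "cd n (pr n a) b + 1 = cd n a b"
      have "lcg_adj n k u (p @ [pr n a])" using adj_cyc[of n k p a "pr n a"] vu u pr_lt[OF an] pr_sc[OF an] by auto
      then show ?thesis using h Dv u by (intro exI[of _ "p @ [pr n a]"]) auto
    qed
  next
    case False2: False
    have pne: "p \<noteq> []"
    proof
      assume "p = []"
      then have "v = p @ hd v # tl v" using V_ne[OF vv] by simp
      then show False using False2 by blast
    qed
    have Dv: "D n (p @ [c]) v = D n p v + cd n 0 c + 1" for c using D_snoc_out False2 by blast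
    show ?thesis
    proof (cases "a = 0")
      case True
      have "lcg_adj n k p u" using adj_child[of n k p] vu u True V_snoc[OF pne] by auto
      then have "lcg_adj n k u p" using adj_sym by metis
      then show ?thesis using Dv[of 0] u True by (intro exI[of _ p]) auto
    next
      case a0: False
      have n0: "0 < n" using n3 by simp
      from cd_step_toward[OF n3 an n0 a0]
      show ?thesis
      proof
        assume h: "cd n (sc n a) 0 + 1 = cd n a 0"
        have "lcg_adj n k u (p @ [sc n a])" using adj_cyc[of n k p a "sc n a"] vu u sc_lt[OF an] by auto
        then show ?thesis using h Dv u cd_sym by (intro exI[of _ "p @ [sc n a]"]) (auto simp: cd_sym)
      next
        assume h: "cd n (pr n a) 0 + 1 = cd n a 0"
        have "lcg_adj n k u (p @ [pr n a])" using adj_cyc[of n k p a "pr n a"] vu u pr_lt[OF an] pr_sc[OF an] by auto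
        then show ?thesis using h Dv u by (intro exI[of _ "p @ [pr n a]"]) (auto simp: cd_sym)
      qed
    qed
  qed
qed

lemma walk_exists: "lcg_vert n k v \<Longrightarrow> D n u v = m \<Longrightarrow> lcg_vert n k u \<Longrightarrow>
   \<exists>p. is_walk (lcg_adj n k) p \<and> hd p = u \<and> last p = v \<and> length p = Suc m"
proof (induction m arbitrary: u)
  case 0
  then have "u = v" using step by fastforce
  then show ?case by (intro exI[of _ "[u]"]) (auto simp: is_walk_def)
next
  case (Suc m)
  then have "u \<noteq> v" by auto
  then obtain y where y: "lcg_adj n k u y" "D n y v + 1 = D n u v" using step Suc.prems by blast
  have "lcg_vert n k y" using y(1) unfolding lcg_adj_def by auto
  then obtain p where p: "is_walk (lcg_adj n k) p" "hd p = y" "last p = v" "length p = Suc m"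
    using Suc.IH[of y] Suc.prems y by auto
  have "p \<noteq> []" using p by auto
  then have "p = y # tl p" using p by (cases p) auto
  then have "is_walk (lcg_adj n k) (u # p)" using p y is_walk_Cons2 by metis
  then show ?case using p \<open>p \<noteq> []\<close> by (intro exI[of _ "u # p"]) auto
qed

lemma walk_lower: "is_walk (lcg_adj n k) p \<Longrightarrow> set w \<subseteq> {..<n} \<Longrightarrow> D n (hd p) w \<le> D n (last p) w + (length p - 1)"
proof (induction p)
  case Nil then show ?case by (simp add: is_walk_def)
next
  case (Cons x p)
  show ?case
  proof (cases p)
    case Nil then show ?thesis by simp
  next
    case (Cons y ys)
    then have h: "lcg_adj n k x y" "is_walk (lcg_adj n k) p" using Cons.prems is_walk_Cons2[of "lcg_adj n k" x y ys] by auto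
    have "D n x w \<le> D n y w + 1" using D_lip[of n k y x w] h(1) adj_sym Cons.prems n3 by metis
    then show ?thesis using Cons.IH h Cons.prems Cons by auto
  qed
qed

lemma gdist_eq: assumes "lcg_vert n k u" "lcg_vert n k v"
  shows "gdist (lcg_adj n k) u v = D n u v"
  unfolding gdist_def
proof (rule Least_equality)
  show "\<exists>p. is_walk (lcg_adj n k) p \<and> hd p = u \<and> last p = v \<and> length p = Suc (D n u v)"
    using walk_exists assms by blast
next
  fix m assume "\<exists>p. is_walk (lcg_adj n k) p \<and> hd p = u \<and> last p = v \<and> length p = Suc m"
  then obtain p where p: "is_walk (lcg_adj n k) p" "hd p = u" "last p = v" "length p = Suc m" by blast
  show "D n u v \<le> m" using walk_lower[OF p(1) V_set[OF assms(2)]] p by simp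
qed

lemma D_tri: "lcg_vert n k v \<Longrightarrow> lcg_vert n k w \<Longrightarrow> D n u v = m \<Longrightarrow> lcg_vert n k u \<Longrightarrow>
   D n u w \<le> D n u v + D n v w"
proof (induction m arbitrary: u)
  case 0
  then have "u = v" using step by fastforce
  then show ?case by simp
next
  case (Suc m)
  then have "u \<noteq> v" by auto
  then obtain y where y: "lcg_adj n k u y" "D n y v + 1 = D n u v" using step Suc.prems by blast
  have vy: "lcg_vert n k y" using y(1) unfolding lcg_adj_def by auto
  have "D n u w \<le> D n y w + 1" using D_lip[of n k y u w] y(1) adj_sym V_set[OF Suc.prems(2)] n3 by metis
  moreover have "D n y w \<le> D n y v + D n v w" using Suc.IH[of y] Suc.prems y vy by auto
  ultimately show ?case using y by simp
qed

lemma D_triangle: "lcg_vert n k u \<Longrightarrow> lcg_vert n k v \<Longrightarrow> lcg_vert n k w \<Longrightarrow> D n u w \<le> D n u v + D n v w"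
  using D_tri by blast

lemma D_pos: "lcg_vert n k u \<Longrightarrow> lcg_vert n k v \<Longrightarrow> u \<noteq> v \<Longrightarrow> 0 < D n u v"
  using step by fastforce

end

lemma finite_V: "finite (lcg_V n k)"
proof -
  have "lcg_V n k \<subseteq> {xs. set xs \<subseteq> {..<n} \<and> length xs \<le> k}"
    unfolding lcg_V_def using V_set V_len by blast
  then show ?thesis using finite_lists_length_le[of "{..<n}" k] finite_subset by blast
qed

definition maxd :: "nat \<Rightarrow> nat \<Rightarrow> nat list \<Rightarrow> nat list \<Rightarrow> bool" where
  "maxd n k u v \<longleftrightarrow> (\<forall>y. lcg_adj n k v y \<longrightarrow> D n y u \<le> D n v u)"

lemma adj_valid: "lcg_adj n k x y \<Longrightarrow> lcg_vert n k x \<and> lcg_vert n k y" unfolding lcg_adj_def by auto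

context
  fixes n k :: nat
  assumes n3: "3 \<le> n" and k2: "2 \<le> k"
begin

lemma interval_iff: "lcg_vert n k u \<Longrightarrow> lcg_vert n k v \<Longrightarrow> lcg_vert n k w \<Longrightarrow>
  v \<in> interval (lcg_V n k) (lcg_adj n k) u w \<longleftrightarrow> D n u v + D n v w = D n u w"
  unfolding interval_def lcg_V_def using gdist_eq[OF n3 k2] by auto

lemma res_pair:
  assumes vu: "lcg_vert n k u" and vv: "lcg_vert n k v" and vw: "lcg_vert n k w"
    and m1: "maxd n k u v" and m2: "maxd n k v u"
    and sr: "strongly_resolves (lcg_V n k) (lcg_adj n k) w u v"
  shows "w = u \<or> w = v"
proof -
  have key: "w = b" if va: "lcg_vert n k a" and vb: "lcg_vert n k b" and m: "maxd n k a b"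
     and e: "D n a b + D n b w = D n a w" for a b
  proof (rule ccontr)
    assume "w \<noteq> b"
    then obtain y where y: "lcg_adj n k b y" "D n y w + 1 = D n b w" using step[OF n3 k2 vb vw] by metis
    have vy: "lcg_vert n k y" using adj_valid y by blast
    have "D n a w \<le> D n a y + D n y w" using D_triangle[OF n3 k2 va vy vw] .
    then have "D n a b < D n a y" using e y by linarith
    moreover have "D n y a \<le> D n b a" using m y unfolding maxd_def by blast
    moreover have "D n y a = D n a y" "D n b a = D n a b" by (rule D_sym)+
    ultimately show False by linarith
  qed
  from sr show ?thesis unfolding strongly_resolves_def
  proof
    assume "v \<in> interval (lcg_V n k) (lcg_adj n k) u w"
    then have "D n u v + D n v w = D n u w" using interval_iff vu vv vw by blast
    then show ?thesis using key[OF vu vv m1] by blast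
  next
    assume "u \<in> interval (lcg_V n k) (lcg_adj n k) v w"
    then have "D n v u + D n u w = D n v w" using interval_iff vu vv vw by blast
    then show ?thesis using key[OF vv vu m2] by blast
  qed
qed

lemma ex_max: fixes f :: "'a \<Rightarrow> nat" assumes "finite S" "x \<in> S" shows "\<exists>z\<in>S. \<forall>y\<in>S. f y \<le> f z"
proof -
  have "Max (f ` S) \<in> f ` S" using assms by (intro Max_in) auto
  then obtain z where "z \<in> S" "f z = Max (f ` S)" by auto
  moreover have "\<forall>y\<in>S. f y \<le> Max (f ` S)" using assms by auto
  ultimately show ?thesis by metis
qed

lemma mmd_cover:
  assumes vu: "lcg_vert n k u" and vv: "lcg_vert n k v"
  shows "\<exists>a b. lcg_vert n k a \<and> lcg_vert n k b \<and> maxd n k a b \<and> maxd n k b a \<and>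
     strongly_resolves (lcg_V n k) (lcg_adj n k) a u v \<and> strongly_resolves (lcg_V n k) (lcg_adj n k) b u v"
proof -
  note tri = D_triangle[OF n3 k2]
  have lip: "D n y x \<le> D n z x + 1" if "lcg_adj n k z y" "lcg_vert n k x" for x y z
    using D_lip[OF that(1) V_set[OF that(2)] n3] .
  define S1 where "S1 = {z \<in> lcg_V n k. D n u v + D n v z = D n u z}"
  have "v \<in> S1" unfolding S1_def lcg_V_def using vv by simp
  moreover have "finite S1" unfolding S1_def using finite_V by simp
  ultimately obtain vs where vs: "vs \<in> S1" and vsmax: "\<forall>y\<in>S1. D n u y \<le> D n u vs"
    using ex_max[of S1 v "\<lambda>z. D n u z"] by blast
  have vvs: "lcg_vert n k vs" and e1: "D n u v + D n v vs = D n u vs" using vs unfolding S1_def lcg_V_def by auto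
  have m1: "maxd n k u vs" unfolding maxd_def
  proof (intro allI impI)
    fix y assume a: "lcg_adj n k vs y"
    have vy: "lcg_vert n k y" using adj_valid a by blast
    show "D n y u \<le> D n vs u"
    proof (rule ccontr)
      assume "\<not> ?thesis"
      then have g: "D n u y > D n u vs" using D_sym[of n u y] D_sym[of n u vs] by simp
      have "D n u y \<le> D n u vs + 1" using lip[OF a vu] D_sym[of n u y] D_sym[of n u vs] by simp
      moreover have "D n v y \<le> D n v vs + 1" using lip[OF a vv] D_sym[of n v y] D_sym[of n v vs] by simp
      moreover have "D n u y \<le> D n u v + D n v y" using tri[OF vu vv vy] .
      ultimately have "D n u v + D n v y = D n u y" using e1 g by linarith
      then have "y \<in> S1" unfolding S1_def lcg_V_def using vy by simp
      then show False using vsmax g by auto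
    qed
  qed
  define S2 where "S2 = {z \<in> lcg_V n k. D n z u + D n u vs = D n z vs}"
  have "u \<in> S2" unfolding S2_def lcg_V_def using vu by simp
  moreover have "finite S2" unfolding S2_def using finite_V by simp
  ultimately obtain us where us: "us \<in> S2" and usmax: "\<forall>y\<in>S2. D n y vs \<le> D n us vs"
    using ex_max[of S2 u "\<lambda>z. D n z vs"] by blast
  have vus: "lcg_vert n k us" and e2: "D n us u + D n u vs = D n us vs" using us unfolding S2_def lcg_V_def by auto
  have m2: "maxd n k vs us" unfolding maxd_def
  proof (intro allI impI)
    fix y assume a: "lcg_adj n k us y"
    have vy: "lcg_vert n k y" using adj_valid a by blast
    show "D n y vs \<le> D n us vs"
    proof (rule ccontr)
      assume "\<not> ?thesis"
      then have g: "D n y vs > D n us vs" by simp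
      have "D n y u \<le> D n us u + 1" using lip[OF a vu] .
      moreover have "D n y vs \<le> D n y u + D n u vs" using tri[OF vy vu vvs] .
      ultimately have "D n y u + D n u vs = D n y vs" using e2 g by linarith
      then have "y \<in> S2" unfolding S2_def lcg_V_def using vy by simp
      then show False using usmax g by auto
    qed
  qed
  have m3: "maxd n k us vs" unfolding maxd_def
  proof (intro allI impI)
    fix y assume a: "lcg_adj n k vs y"
    have vy: "lcg_vert n k y" using adj_valid a by blast
    have "D n y u \<le> D n vs u" using m1 a unfolding maxd_def by blast
    moreover have "D n y us \<le> D n y u + D n u us" using tri[OF vy vu vus] .
    ultimately show "D n y us \<le> D n vs us" using e2 D_sym[of n u us] D_sym[of n vs u] D_sym[of n vs us] by simp
  qed
  have r1: "strongly_resolves (lcg_V n k) (lcg_adj n k) vs u v"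
    unfolding strongly_resolves_def using interval_iff[OF vu vv vvs] e1 by blast
  have "D n us v \<le> D n us u + D n u v" using tri[OF vus vu vv] .
  moreover have "D n us vs \<le> D n us v + D n v vs" using tri[OF vus vv vvs] .
  ultimately have "D n v u + D n u us = D n v us" using e1 e2 D_sym[of n v u] D_sym[of n u us] D_sym[of n v us] D_sym[of n us v] D_sym[of n u v] by linarith
  then have r2: "strongly_resolves (lcg_V n k) (lcg_adj n k) us u v"
    unfolding strongly_resolves_def using interval_iff[OF vv vu vus] by blast
  show ?thesis using vus vvs m2 m3 r1 r2 by blast
qed

end

context
  fixes n k :: nat
  assumes n3: "3 \<le> n" and k2: "2 \<le> k"
begin

lemma sc0: "sc n 0 = 1" using n3 unfolding sc_def by auto

lemma M1: assumes vu: "lcg_vert n k u" and vv: "lcg_vert n k v" and m: "maxd n k u v"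
  shows "length v = k \<and> last v \<noteq> 0"
proof (rule ccontr)
  assume nl: "\<not> (length v = k \<and> last v \<noteq> 0)"
  have vne: "v \<noteq> []" using V_ne vv by auto
  define p a where "p = butlast v" and "a = last v"
  have v: "v = p @ [a]" using vne unfolding p_def a_def by simp
  have an: "a < n" using V_set[OF vv] v by auto
  have lenv: "length v \<le> k" using V_len vv by auto
  have "\<exists>y. lcg_adj n k v y \<and> D n v u < D n y u"
  proof (cases "length v < k \<and> (length v = 1 \<or> a \<noteq> 0)")
    case A: True
    show ?thesis
    proof (cases "\<exists>b rest. u = v @ b # rest")
      case True
      then obtain b rest where u: "u = p @ a # b # rest" using v by auto
      have adj: "lcg_adj n k v (p @ [sc n a])" using adj_cyc[of n k p a "sc n a"] vv v sc_lt[OF an] by auto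
      have "D n (p @ [sc n a]) u = cd n (sc n a) a + W n (b # rest)"
        using u D_prefix[of n p "[sc n a]" "a # b # rest"] D_single by simp
      moreover have "cd n (sc n a) a = 1" using cd_sc[OF n3 an] cd_sym by metis
      moreover have "D n v u = W n (b # rest)"
        using u v D_prefix[of n p "[a]" "a # b # rest"] D_single by simp
      ultimately show ?thesis using adj by (intro exI[of _ "p @ [sc n a]"]) auto
    next
      case False
      have "lcg_vert n k (v @ [0])" using V_snoc[OF vne] A vv n3 v by auto
      then have adj: "lcg_adj n k v (v @ [0])" using adj_child vv by auto
      have "D n (v @ [0]) u = D n v u + cd n 0 0 + 1" using D_snoc_out False by blast
      then show ?thesis using adj by (intro exI[of _ "v @ [0]"]) auto
    qed
  next
    case B: False
    have a0: "a = 0" using B nl lenv v by auto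
    have l2: "2 \<le> length v" using B nl lenv v k2 vne by (cases "length v = 1") (auto simp: Suc_le_eq)
    have pne: "p \<noteq> []" using l2 v by auto
    have vp: "lcg_vert n k p" and pc: "length p = 1 \<or> last p \<noteq> 0" using V_snoc[OF pne] vv v by auto
    have adjp: "lcg_adj n k v p" using adj_child[OF vp] vv v a0 adj_sym by metis
    show ?thesis
    proof (cases "\<exists>b rest. u = p @ b # rest")
      case True
      then obtain b rest where u: "u = p @ b # rest" by blast
      show ?thesis
      proof (cases "b = 0")
        case True
        show ?thesis
        proof (cases rest)
          case Nil
          then have "u = v" using u v a0 True by simp
          moreover have "D n p v = 1" using v a0 D_prefix0'[of n p "[0]"] D_sym[of n p v] by (simp add: cd_def)
          ultimately show ?thesis using adjp by (intro exI[of _ p]) auto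
        next
          case (Cons r rest')
          then have "lcg_vert n k (v @ [r])" using V_prefix[of n k v r rest'] vu u v True a0 by simp
          then have "length v = 1 \<or> last v \<noteq> 0" using V_snoc vne by auto
          then show ?thesis using l2 v a0 by simp
        qed
      next
        case False
        have "D n p u = cd n 0 b + 1 + W n rest" using u D_prefix0 by simp
        moreover have "D n v u = cd n 0 b + W n rest"
          using u v a0 D_prefix[of n p "[0]" "b # rest"] D_single by simp
        ultimately show ?thesis using adjp by (intro exI[of _ p]) auto
      qed
    next
      case False
      have adj: "lcg_adj n k v (p @ [1])" using adj_cyc[of n k p 0 1] vv v a0 sc0 n3 by auto
      have "D n (p @ [1]) u = D n p u + cd n 0 1 + 1" using D_snoc_out False by blast
      moreover have "D n v u = D n p u + cd n 0 0 + 1" using D_snoc_out False v a0 by blast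
      moreover have "cd n 0 1 = 1" using cd_sc[of n 0] n3 sc0 by simp
      ultimately show ?thesis using adj by (intro exI[of _ "p @ [1]"]) auto
    qed
  qed
  then show False using m unfolding maxd_def by force
qed

end

lemma V_leaf: "lcg_vert n k (a # ys @ [j]) \<longleftrightarrow> a < n \<and> set ys \<subseteq> {1..<n} \<and> j < n \<and> length ys + 2 \<le> k"
proof -
  have mid: "(\<forall>i. 0 < i \<and> i < length (a # ys @ [j]) - 1 \<longrightarrow> 1 \<le> (a # ys @ [j]) ! i \<and> (a # ys @ [j]) ! i < n)
     \<longleftrightarrow> (\<forall>i < length ys. 1 \<le> ys ! i \<and> ys ! i < n)"
  proof
    assume H: "\<forall>i. 0 < i \<and> i < length (a # ys @ [j]) - 1 \<longrightarrow> 1 \<le> (a # ys @ [j]) ! i \<and> (a # ys @ [j]) ! i < n"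
    show "\<forall>i < length ys. 1 \<le> ys ! i \<and> ys ! i < n"
    proof (intro allI impI)
      fix i assume "i < length ys"
      then show "1 \<le> ys ! i \<and> ys ! i < n" using H[rule_format, of "Suc i"] by (simp add: nth_append)
    qed
  next
    assume H: "\<forall>i < length ys. 1 \<le> ys ! i \<and> ys ! i < n"
    show "\<forall>i. 0 < i \<and> i < length (a # ys @ [j]) - 1 \<longrightarrow> 1 \<le> (a # ys @ [j]) ! i \<and> (a # ys @ [j]) ! i < n"
    proof (intro allI impI)
      fix i assume i: "0 < i \<and> i < length (a # ys @ [j]) - 1"
      then obtain i' where "i = Suc i'" "i' < length ys" by (cases i) auto
      then show "1 \<le> (a # ys @ [j]) ! i \<and> (a # ys @ [j]) ! i < n" using H by (simp add: nth_append)
    qed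
  qed
  have "(\<forall>i < length ys. 1 \<le> ys ! i \<and> ys ! i < n) \<longleftrightarrow> set ys \<subseteq> {1..<n}"
    unfolding subset_iff atLeastLessThan_iff in_set_conv_nth by (auto simp: Suc_le_eq)
  then show ?thesis using mid unfolding lcg_vert_def by auto
qed

definition QQ :: "nat \<Rightarrow> nat \<Rightarrow> nat list set" where
  "QQ n k = {a # ys | a ys. a < n \<and> set ys \<subseteq> {1..<n} \<and> length ys = k - 2}"

context
  fixes n k :: nat
  assumes n3: "3 \<le> n" and k2: "2 \<le> k"
begin

lemma leafQ: assumes vv: "lcg_vert n k v" and l: "length v = k" and la: "last v \<noteq> 0"
  shows "butlast v \<in> QQ n k \<and> v = butlast v @ [last v] \<and> 1 \<le> last v \<and> last v < n"
proof -
  have vne: "v \<noteq> []" using vv V_ne by auto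
  have tne: "tl v \<noteq> []" using l k2 vne by (cases v) auto
  define a ys j where "a = hd v" and "ys = butlast (tl v)" and "j = last v"
  have v: "v = a # ys @ [j]" unfolding a_def ys_def j_def using vne tne by (cases v) auto
  have c: "a < n \<and> set ys \<subseteq> {1..<n} \<and> j < n \<and> length ys + 2 \<le> k" using vv v V_leaf[of n k a ys j] by simp
  have "length ys = k - 2" using l v by simp
  then have "butlast v \<in> QQ n k" unfolding QQ_def using c v by auto
  moreover have "v = butlast v @ [last v]" using vne by simp
  moreover have "1 \<le> last v \<and> last v < n"
  proof -
    have lj: "last v = j" using v by simp
    show ?thesis using c la unfolding lj by (simp add: Suc_le_eq)
  qed
  ultimately show ?thesis by blast
qed

lemma Q_valid: assumes "q \<in> QQ n k" "j < n" shows "lcg_vert n k (q @ [j])" "length q = k - 1"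
proof -
  obtain a ys where q: "q = a # ys" "a < n" "set ys \<subseteq> {1..<n}" "length ys = k - 2"
    using assms unfolding QQ_def by blast
  show "lcg_vert n k (q @ [j])" using V_leaf q assms k2 by simp
  show "length q = k - 1" using q k2 by simp
qed

lemma D_same: "D n (q @ [x]) (q @ [y]) = cd n x y"
  using D_prefix[of n q "[x]" "[y]"] D_single[of n x y "[]"] by simp

lemma D_cross: assumes "q \<in> QQ n k" "r \<in> QQ n k" "q \<noteq> r"
  shows "D n (r @ [x]) (q @ [a]) = D n r (q @ [a]) + cd n 0 x + 1"
proof -
  have lq: "length q = length r" using Q_valid[OF assms(1), of 0] Q_valid[OF assms(2), of 0] n3 by simp
  have "\<not> (\<exists>t rest. q @ [a] = r @ t # rest)"
  proof
    assume "\<exists>t rest. q @ [a] = r @ t # rest"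
    then obtain t rest where e: "q @ [a] = r @ t # rest" by blast
    have "length (q @ [a]) = length (r @ t # rest)" using e by simp
    then have "length rest = 0" using lq by simp
    then have "q @ [a] = r @ [t]" using e by simp
    then show False using assms(3) by simp
  qed
  then show ?thesis using D_snoc_out by blast
qed

lemma nbr_leaf: assumes q: "q \<in> QQ n k" and b: "1 \<le> b" "b < n" and a: "lcg_adj n k (q @ [b]) y"
  shows "\<exists>b'. y = q @ [b'] \<and> b' < n"
proof -
  have lq: "length q = k - 1" using Q_valid[OF q b(2)] by simp
  have vy: "lcg_vert n k y" using adj_valid a by blast
  have "(\<exists>p a b'. q @ [b] = p @ [a] \<and> y = p @ [b'] \<and> a < n \<and> b' < n \<and> (b' = sc n a \<or> a = sc n b'))
     \<or> y = (q @ [b]) @ [0] \<or> q @ [b] = y @ [0]" using adj_cases[OF a] by blast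
  then show ?thesis
  proof (elim disjE)
    assume "\<exists>p a b'. q @ [b] = p @ [a] \<and> y = p @ [b'] \<and> a < n \<and> b' < n \<and> (b' = sc n a \<or> a = sc n b')"
    then show ?thesis by auto
  next
    assume "y = (q @ [b]) @ [0]"
    then have "length y = k + 1" using lq k2 by simp
    then show ?thesis using V_len[OF vy] by simp
  next
    assume "q @ [b] = y @ [0]"
    then show ?thesis using b by simp
  qed
qed

lemma same_far: assumes q: "q \<in> QQ n k" and a: "a < n" and b: "b < n" and m: "maxd n k (q @ [a]) (q @ [b])"
  shows "n \<le> 2 * cd n a b + 1"
proof (rule ccontr)
  assume "\<not> ?thesis"
  then have lt: "2 * cd n a b + 1 < n" by simp
  have vb: "lcg_vert n k (q @ [b])" using Q_valid[OF q b] by simp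
  from cd_step_away[OF n3 a b lt] show False
  proof
    assume h: "cd n a (sc n b) = cd n a b + 1"
    have "lcg_adj n k (q @ [b]) (q @ [sc n b])" using adj_cyc[OF vb sc_lt[OF b]] by simp
    then have "D n (q @ [sc n b]) (q @ [a]) \<le> D n (q @ [b]) (q @ [a])" using m unfolding maxd_def by blast
    then show False using h D_same cd_sym by (metis Suc_eq_plus1 not_less_eq_eq order_refl)
  next
    assume h: "cd n a (pr n b) = cd n a b + 1"
    have "lcg_adj n k (q @ [b]) (q @ [pr n b])" using adj_cyc[OF vb pr_lt[OF b]] pr_sc[OF b] by simp
    then have "D n (q @ [pr n b]) (q @ [a]) \<le> D n (q @ [b]) (q @ [a])" using m unfolding maxd_def by blast
    then show False using h D_same cd_sym by (metis Suc_eq_plus1 not_less_eq_eq order_refl)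
  qed
qed

lemma cross_far: assumes q: "q \<in> QQ n k" and r: "r \<in> QQ n k" and qr: "q \<noteq> r" and a: "a < n" and b: "b < n"
  and m: "maxd n k (q @ [a]) (r @ [b])"
  shows "n \<le> 2 * cd n 0 b + 1"
proof (rule ccontr)
  assume "\<not> ?thesis"
  then have lt: "2 * cd n 0 b + 1 < n" by simp
  have vb: "lcg_vert n k (r @ [b])" using Q_valid[OF r b] by simp
  have n0: "0 < n" using n3 by simp
  note DC = D_cross[OF q r qr]
  from cd_step_away[OF n3 n0 b lt] show False
  proof
    assume h: "cd n 0 (sc n b) = cd n 0 b + 1"
    have "lcg_adj n k (r @ [b]) (r @ [sc n b])" using adj_cyc[OF vb sc_lt[OF b]] by simp
    then have "D n (r @ [sc n b]) (q @ [a]) \<le> D n (r @ [b]) (q @ [a])" using m unfolding maxd_def by blast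
    then show False using h DC by simp
  next
    assume h: "cd n 0 (pr n b) = cd n 0 b + 1"
    have "lcg_adj n k (r @ [b]) (r @ [pr n b])" using adj_cyc[OF vb pr_lt[OF b]] pr_sc[OF b] by simp
    then have "D n (r @ [pr n b]) (q @ [a]) \<le> D n (r @ [b]) (q @ [a])" using m unfolding maxd_def by blast
    then show False using h DC by simp
  qed
qed

lemma same_mmd: assumes q: "q \<in> QQ n k" and a: "a < n" and b: "1 \<le> b" "b < n" and f: "n \<le> 2 * cd n a b + 1"
  shows "maxd n k (q @ [a]) (q @ [b])"
  unfolding maxd_def
proof (intro allI impI)
  fix y assume "lcg_adj n k (q @ [b]) y"
  then obtain b' where y: "y = q @ [b']" "b' < n" using nbr_leaf[OF q b] by blast
  have "2 * cd n b' a \<le> n" using cd_le_half[OF y(2) a] .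
  then have "cd n b' a \<le> cd n b a" using f cd_sym[of n a b] by arith
  then show "D n y (q @ [a]) \<le> D n (q @ [b]) (q @ [a])" using y D_same by simp
qed

lemma cross_mmd: assumes q: "q \<in> QQ n k" and r: "r \<in> QQ n k" and qr: "q \<noteq> r" and a: "a < n"
  and b: "1 \<le> b" "b < n" and f: "n \<le> 2 * cd n 0 b + 1"
  shows "maxd n k (q @ [a]) (r @ [b])"
  unfolding maxd_def
proof (intro allI impI)
  fix y assume "lcg_adj n k (r @ [b]) y"
  then obtain b' where y: "y = r @ [b']" "b' < n" using nbr_leaf[OF r b] by blast
  have n0: "0 < n" using n3 by simp
  have "2 * cd n 0 b' \<le> n" using cd_le_half[OF n0 y(2)] .
  then have "cd n 0 b' \<le> cd n 0 b" using f by arith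
  then show "D n y (q @ [a]) \<le> D n (r @ [b]) (q @ [a])" using y D_cross[OF q r qr] by simp
qed

end

definition R0 :: "nat \<Rightarrow> nat \<Rightarrow> nat list set" where
  "R0 n k = (\<lambda>(q, j). q @ [j]) ` (QQ n k \<times> {1..(n + 1) div 2}) - {(0 # replicate (k - 2) 1) @ [(n + 1) div 2]}"

lemma cd0: "b < n \<Longrightarrow> cd n 0 b = min b (n - b)" unfolding cd_def by simp
lemma cd_le_diff: "cd n a b \<le> (if a \<le> b then b - a else a - b)" unfolding cd_def by simp

lemma card_QQ: "card (QQ n k) = n * (n - 1) ^ (k - 2)" and finite_QQ: "finite (QQ n k)"
proof -
  define L where "L = {ys. set ys \<subseteq> {1..<n} \<and> length ys = k - 2}"
  have Q: "QQ n k = (\<lambda>(a, ys). a # ys) ` ({..<n} \<times> L)" unfolding QQ_def L_def by auto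
  have inj: "inj_on (\<lambda>(a, ys). a # ys) ({..<n} \<times> L)" unfolding inj_on_def by auto
  have fL: "finite L" unfolding L_def using finite_lists_length_eq[of "{1..<n}" "k - 2"] by simp
  have cL: "card L = (n - 1) ^ (k - 2)" unfolding L_def using card_lists_length_eq[of "{1..<n}" "k - 2"] by simp
  show "card (QQ n k) = n * (n - 1) ^ (k - 2)" unfolding Q by (simp add: card_image[OF inj] card_cartesian_product cL)
  show "finite (QQ n k)" unfolding Q using fL by simp
qed

context
  fixes n k :: nat
  assumes n3: "3 \<le> n" and k2: "2 \<le> k"
begin


lemma arith_c: "(n div 2) + ((n + 1) div 2) = n" "n \<le> 2 * ((n + 1) div 2)" "2 * ((n + 1) div 2) \<le> n + 1" "1 \<le> (n div 2)" "((n + 1) div 2) < n" "2 * (n div 2) \<le> n" "n \<le> 2 * (n div 2) + 1"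
  using n3 by arith+

lemma q0Q: "(0 # replicate (k - 2) 1) \<in> QQ n k" unfolding QQ_def using n3 by auto

lemma R0_mem: "x \<in> R0 n k \<longleftrightarrow> (\<exists>q j. x = q @ [j] \<and> q \<in> QQ n k \<and> 1 \<le> j \<and> j \<le> ((n + 1) div 2)) \<and> x \<noteq> (0 # replicate (k - 2) 1) @ [((n + 1) div 2)]"
  unfolding R0_def by auto

lemma R0_sub: "R0 n k \<subseteq> lcg_V n k"
proof
  fix x assume "x \<in> R0 n k"
  then obtain q j where "x = q @ [j]" "q \<in> QQ n k" "j \<le> ((n + 1) div 2)" using R0_mem by blast
  then show "x \<in> lcg_V n k" unfolding lcg_V_def using Q_valid[OF n3 k2, of q j] arith_c by auto
qed

lemma card_R0: "card (R0 n k) = ((n + 1) div 2) * card (QQ n k) - 1"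
proof -
  have inj: "inj_on (\<lambda>(q, j). q @ [j]) (QQ n k \<times> {1..((n + 1) div 2)})" unfolding inj_on_def by auto
  have "card ((\<lambda>(q, j). q @ [j]) ` (QQ n k \<times> {1..((n + 1) div 2)})) = card (QQ n k \<times> {1..((n + 1) div 2)})"
    by (rule card_image[OF inj])
  also have "\<dots> = card (QQ n k) * card {1..((n + 1) div 2)}" by (rule card_cartesian_product)
  also have "\<dots> = card (QQ n k) * ((n + 1) div 2)" by simp
  finally have "card ((\<lambda>(q, j). q @ [j]) ` (QQ n k \<times> {1..((n + 1) div 2)})) = card (QQ n k) * ((n + 1) div 2)" .
  moreover have "(0 # replicate (k - 2) 1) @ [((n + 1) div 2)] \<in> (\<lambda>(q, j). q @ [j]) ` (QQ n k \<times> {1..((n + 1) div 2)})" using q0Q arith_c by force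
  ultimately show ?thesis unfolding R0_def by (simp add: card_Diff_singleton mult.commute)
qed

lemma cover:
  assumes vu: "lcg_vert n k u" and vv: "lcg_vert n k v" and m1: "maxd n k u v" and m2: "maxd n k v u"
  shows "u \<in> R0 n k \<or> v \<in> R0 n k"
proof (rule ccontr)
  assume nn: "\<not> ?thesis"
  obtain q a where u: "u = q @ [a]" "q \<in> QQ n k" "1 \<le> a" "a < n"
    using leafQ[OF n3 k2 vu] M1[OF n3 k2 vv vu m2] by metis
  obtain r b where v: "v = r @ [b]" "r \<in> QQ n k" "1 \<le> b" "b < n"
    using leafQ[OF n3 k2 vv] M1[OF n3 k2 vu vv m1] by metis
  have ua: "((n + 1) div 2) \<le> a" using nn u R0_mem by force
  have ua2: "a = ((n + 1) div 2) \<longrightarrow> q = (0 # replicate (k - 2) 1)" using nn u R0_mem by force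
  have vb: "((n + 1) div 2) \<le> b" using nn v R0_mem by force
  have vb2: "b = ((n + 1) div 2) \<longrightarrow> r = (0 # replicate (k - 2) 1)" using nn v R0_mem by force
  show False
  proof (cases "q = r")
    case True
    have f: "n \<le> 2 * cd n a b + 1" using same_far[OF n3 k2 u(2) u(4) v(4)] m1 u v True by simp
    have "cd n a b \<le> (if a \<le> b then b - a else a - b)" by (rule cd_le_diff)
    then have "cd n a b + a \<le> b \<or> cd n a b + b \<le> a" by (cases "a \<le> b") auto
    then show False using f ua vb u(4) v(4) arith_c(2) by linarith
  next
    case False
    have fb: "n \<le> 2 * cd n 0 b + 1" using cross_far[OF n3 k2 u(2) v(2) False u(4) v(4)] m1 u v by simp
    have fa: "n \<le> 2 * cd n 0 a + 1" using cross_far[OF n3 k2 v(2) u(2) _ v(4) u(4)] m2 u v False by simp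
    have "b \<le> ((n + 1) div 2)" using fb cd0[OF v(4)] arith_c by (simp add: min_def split: if_splits; arith)
    moreover have "a \<le> ((n + 1) div 2)" using fa cd0[OF u(4)] arith_c by (simp add: min_def split: if_splits; arith)
    ultimately show False using ua ua2 vb vb2 False by simp
  qed
qed

lemma R0_srs: "strong_resolving_set (lcg_V n k) (lcg_adj n k) (R0 n k)"
  unfolding strong_resolving_set_def
proof (intro conjI ballI impI)
  show "R0 n k \<subseteq> lcg_V n k" by (rule R0_sub)
next
  fix u v assume "u \<in> lcg_V n k" "v \<in> lcg_V n k" "u \<noteq> v"
  then have vu: "lcg_vert n k u" and vv: "lcg_vert n k v" unfolding lcg_V_def by auto
  obtain a b where ab: "lcg_vert n k a" "lcg_vert n k b" "maxd n k a b" "maxd n k b a"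
     "strongly_resolves (lcg_V n k) (lcg_adj n k) a u v" "strongly_resolves (lcg_V n k) (lcg_adj n k) b u v"
    using mmd_cover[OF n3 k2 vu vv] by blast
  then have "a \<in> R0 n k \<or> b \<in> R0 n k" using cover by blast
  then show "\<exists>w\<in>R0 n k. strongly_resolves (lcg_V n k) (lcg_adj n k) w u v" using ab by blast
qed

end

context
  fixes n k :: nat
  assumes n3: "3 \<le> n" and k2: "2 \<le> k"
begin

lemma hit: assumes R: "strong_resolving_set (lcg_V n k) (lcg_adj n k) R"
  and vx: "lcg_vert n k x" and vy: "lcg_vert n k y" and ne: "x \<noteq> y"
  and m1: "maxd n k x y" and m2: "maxd n k y x"
  shows "x \<in> R \<or> y \<in> R"
proof -
  have "x \<in> lcg_V n k" "y \<in> lcg_V n k" using vx vy unfolding lcg_V_def by auto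
  then obtain w where w: "w \<in> R" "strongly_resolves (lcg_V n k) (lcg_adj n k) w x y"
    using R ne unfolding strong_resolving_set_def by blast
  have "w \<in> lcg_V n k" using w R unfolding strong_resolving_set_def by auto
  then have "lcg_vert n k w" unfolding lcg_V_def by simp
  then have "w = x \<or> w = y" using res_pair[OF n3 k2 vx vy _ m1 m2 w(2)] by simp
  then show ?thesis using w by auto
qed

lemma same_pair: assumes R: "strong_resolving_set (lcg_V n k) (lcg_adj n k) R" and q: "q \<in> QQ n k"
  and a: "1 \<le> a" "a < n" and b: "1 \<le> b" "b < n" and ab: "a \<noteq> b" and f: "n \<le> 2 * cd n a b + 1"
  shows "q @ [a] \<in> R \<or> q @ [b] \<in> R"
proof -
  have m1: "maxd n k (q @ [a]) (q @ [b])" using same_mmd[OF n3 k2 q a(2) b f] .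
  have m2: "maxd n k (q @ [b]) (q @ [a])" using same_mmd[OF n3 k2 q b(2) a] f cd_sym[of n a b] by simp
  show ?thesis using hit[OF R Q_valid(1)[OF n3 k2 q a(2)] Q_valid(1)[OF n3 k2 q b(2)] _ m1 m2] ab by simp
qed

lemma LB1: assumes R: "strong_resolving_set (lcg_V n k) (lcg_adj n k) R" and fR: "finite R" and q: "q \<in> QQ n k"
  shows "(n + 1) div 2 - 1 \<le> card (R \<inter> (\<lambda>j. q @ [j]) ` {1..<n})"
proof -
  note ac = arith_c[OF n3 k2]
  define g where "g j = (if q @ [j] \<in> R then q @ [j] else q @ [j + n div 2])" for j
  have "g ` {1..<(n + 1) div 2} \<subseteq> R \<inter> (\<lambda>j. q @ [j]) ` {1..<n}"
  proof
    fix x assume "x \<in> g ` {1..<(n + 1) div 2}"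
    then obtain j where j: "1 \<le> j" "j < (n + 1) div 2" "x = g j" by auto
    have jn: "j + n div 2 < n" using j ac by linarith
    have "cd n j (j + n div 2) = n div 2" using cdA[of j "j + n div 2" n] ac by simp
    then have "q @ [j] \<in> R \<or> q @ [j + n div 2] \<in> R"
      using same_pair[OF R q j(1) _ _ jn] j ac by simp
    then show "x \<in> R \<inter> (\<lambda>j. q @ [j]) ` {1..<n}" using j jn ac unfolding g_def by auto
  qed
  moreover have "inj_on g {1..<(n + 1) div 2}"
  proof (rule inj_onI)
    fix i j assume i: "i \<in> {1..<(n + 1) div 2}" and j: "j \<in> {1..<(n + 1) div 2}" and e: "g i = g j"
    then show "i = j" unfolding g_def using ac by (auto split: if_splits)
  qed
  ultimately have "card {1..<(n + 1) div 2} \<le> card (R \<inter> (\<lambda>j. q @ [j]) ` {1..<n})"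
    using card_inj_on_le fR by (metis finite_Int)
  then show ?thesis by simp
qed

lemma LB2: assumes R: "strong_resolving_set (lcg_V n k) (lcg_adj n k) R" and fR: "finite R" and q: "q \<in> QQ n k"
  and h1: "q @ [n div 2] \<in> R" and h2: "q @ [(n + 1) div 2] \<in> R"
  shows "(n + 1) div 2 \<le> card (R \<inter> (\<lambda>j. q @ [j]) ` {1..<n})"
proof -
  note ac = arith_c[OF n3 k2]
  define g where "g j = (if j < n div 2 then (if q @ [j] \<in> R then q @ [j] else q @ [j + (n + 1) div 2]) else q @ [j])" for j
  have "g ` {1..(n + 1) div 2} \<subseteq> R \<inter> (\<lambda>j. q @ [j]) ` {1..<n}"
  proof
    fix x assume "x \<in> g ` {1..(n + 1) div 2}"
    then obtain j where j: "1 \<le> j" "j \<le> (n + 1) div 2" "x = g j" by auto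
    show "x \<in> R \<inter> (\<lambda>j. q @ [j]) ` {1..<n}"
    proof (cases "j < n div 2")
      case True
      have jn: "j + (n + 1) div 2 < n" using True ac by linarith
      have "cd n j (j + (n + 1) div 2) = n + j - (j + (n + 1) div 2)" by (rule cdB) (use jn ac in arith)+
      then have "cd n j (j + (n + 1) div 2) = n div 2" using ac by arith
      then have "q @ [j] \<in> R \<or> q @ [j + (n + 1) div 2] \<in> R"
        using same_pair[OF R q j(1) _ _ jn] True ac by simp
      then show ?thesis using j jn ac True unfolding g_def by auto
    next
      case False
      then have "j = n div 2 \<or> j = (n + 1) div 2" using j ac by linarith
      then show ?thesis using h1 h2 False j ac unfolding g_def by auto
    qed
  qed
  moreover have "inj_on g {1..(n + 1) div 2}"
  proof (rule inj_onI)
    fix i j assume i: "i \<in> {1..(n + 1) div 2}" and j: "j \<in> {1..(n + 1) div 2}" and e: "g i = g j"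
    then show "i = j" unfolding g_def using ac by (auto split: if_splits)
  qed
  ultimately have "card {1..(n + 1) div 2} \<le> card (R \<inter> (\<lambda>j. q @ [j]) ` {1..<n})"
    using card_inj_on_le fR by (metis finite_Int)
  then show ?thesis by simp
qed


lemma lower: assumes R: "strong_resolving_set (lcg_V n k) (lcg_adj n k) R"
  shows "card (QQ n k) * ((n + 1) div 2) \<le> card R + 1"
proof -
  note ac = arith_c[OF n3 k2]
  have fR: "finite R" using R finite_V finite_subset unfolding strong_resolving_set_def by blast
  define B where "B q = R \<inter> (\<lambda>j. q @ [j]) ` {1..<n}" for q
  define Def where "Def = {q \<in> QQ n k. q @ [n div 2] \<notin> R \<or> q @ [(n + 1) div 2] \<notin> R}"
  have fQ: "finite (QQ n k)" by (rule finite_QQ)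
  have DefQ: "Def \<subseteq> QQ n k" unfolding Def_def by auto
  have fDef: "finite Def" using DefQ fQ finite_subset by blast
  have anti: "n \<le> 2 * cd n 0 a + 1 \<and> 1 \<le> a \<and> a < n" if "a = n div 2 \<or> a = (n + 1) div 2" for a
  proof -
    have "a < n" using that ac by auto
    then have "cd n 0 a = min a (n - a)" by (rule cd0)
    moreover have "min a (n - a) = n div 2" using that ac by (auto simp: min_def; arith)
    ultimately have "cd n 0 a = n div 2" by simp
    then show ?thesis using that ac by auto
  qed
  have "card Def \<le> Suc 0"
  proof (subst card_le_Suc0_iff_eq[OF fDef], intro ballI)
    fix q1 q2 assume q1: "q1 \<in> Def" and q2: "q2 \<in> Def"
    show "q1 = q2"
    proof (rule ccontr)
      assume ne: "q1 \<noteq> q2"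
      obtain a1 where a1: "a1 = n div 2 \<or> a1 = (n + 1) div 2" "q1 @ [a1] \<notin> R" using q1 unfolding Def_def by blast
      obtain a2 where a2: "a2 = n div 2 \<or> a2 = (n + 1) div 2" "q2 @ [a2] \<notin> R" using q2 unfolding Def_def by blast
      have Q1: "q1 \<in> QQ n k" and Q2: "q2 \<in> QQ n k" using q1 q2 DefQ by auto
      have A1: "n \<le> 2 * cd n 0 a1 + 1" "1 \<le> a1" "a1 < n" using anti[OF a1(1)] by auto
      have A2: "n \<le> 2 * cd n 0 a2 + 1" "1 \<le> a2" "a2 < n" using anti[OF a2(1)] by auto
      have m1: "maxd n k (q1 @ [a1]) (q2 @ [a2])" using cross_mmd[OF n3 k2 Q1 Q2 ne A1(3) A2(2,3) A2(1)] .
      have m2: "maxd n k (q2 @ [a2]) (q1 @ [a1])" using cross_mmd[OF n3 k2 Q2 Q1 _ A2(3) A1(2,3) A1(1)] ne by simp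
      have "q1 @ [a1] \<noteq> q2 @ [a2]" using ne by simp
      then have "q1 @ [a1] \<in> R \<or> q2 @ [a2] \<in> R"
        using hit[OF R Q_valid(1)[OF n3 k2 Q1 A1(3)] Q_valid(1)[OF n3 k2 Q2 A2(3)] _ m1 m2] by simp
      then show False using a1 a2 by simp
    qed
  qed
  have per: "(n + 1) div 2 \<le> card (B q) + (if q \<in> Def then 1 else 0)" if q: "q \<in> QQ n k" for q
  proof (cases "q \<in> Def")
    case True
    have "(n + 1) div 2 - 1 \<le> card (B q)" unfolding B_def by (rule LB1[OF R fR q])
    then show ?thesis using True ac by simp
  next
    case False
    then have "q @ [n div 2] \<in> R" "q @ [(n + 1) div 2] \<in> R" using q unfolding Def_def by auto
    then have "(n + 1) div 2 \<le> card (B q)" unfolding B_def using LB2[OF R fR q] by simp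
    then show ?thesis by simp
  qed
  have disj: "\<forall>i\<in>QQ n k. \<forall>j\<in>QQ n k. i \<noteq> j \<longrightarrow> B i \<inter> B j = {}" unfolding B_def by auto
  have fB: "\<forall>i\<in>QQ n k. finite (B i)" unfolding B_def using fR by auto
  have "card (\<Union>(B ` QQ n k)) = (\<Sum>q\<in>QQ n k. card (B q))" by (rule card_UN_disjoint[OF fQ fB disj])
  moreover have "card (\<Union>(B ` QQ n k)) \<le> card R" using fR unfolding B_def by (intro card_mono) auto
  ultimately have s1: "(\<Sum>q\<in>QQ n k. card (B q)) \<le> card R" by simp
  have "(\<Sum>q\<in>QQ n k. (if q \<in> Def then 1 else 0)) = card (QQ n k \<inter> {q. q \<in> Def})"
    by (simp add: sum.If_cases fQ)
  also have "QQ n k \<inter> {q. q \<in> Def} = Def" using DefQ by auto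
  finally have s2: "(\<Sum>q\<in>QQ n k. (if q \<in> Def then 1 else 0)) = card Def" .
  have "card (QQ n k) * ((n + 1) div 2) = (\<Sum>q\<in>QQ n k. (n + 1) div 2)" by simp
  also have "\<dots> \<le> (\<Sum>q\<in>QQ n k. card (B q) + (if q \<in> Def then 1 else 0))" by (rule sum_mono) (rule per)
  also have "\<dots> = (\<Sum>q\<in>QQ n k. card (B q)) + card Def" by (simp add: sum.distrib s2)
  finally show ?thesis using s1 \<open>card Def \<le> Suc 0\<close> by linarith
qed

theorem main: "sdim (lcg_V n k) (lcg_adj n k) = ((n + 1) div 2) * n * (n - 1) ^ (k - 2) - 1"
proof -
  define S where "S = {card R | R. strong_resolving_set (lcg_V n k) (lcg_adj n k) R}"
  have N: "((n + 1) div 2) * n * (n - 1) ^ (k - 2) - 1 = ((n + 1) div 2) * card (QQ n k) - 1"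
    using card_QQ by (simp add: mult.assoc)
  have "S \<subseteq> card ` Pow (lcg_V n k)" unfolding S_def strong_resolving_set_def by auto
  then have fS: "finite S" using finite_V finite_subset by blast
  have inS: "((n + 1) div 2) * card (QQ n k) - 1 \<in> S"
    unfolding S_def using R0_srs[OF n3 k2] card_R0[OF n3 k2] by force
  have lb: "((n + 1) div 2) * card (QQ n k) - 1 \<le> y" if "y \<in> S" for y
  proof -
    obtain R where y: "y = card R" and R: "strong_resolving_set (lcg_V n k) (lcg_adj n k) R" using \<open>y \<in> S\<close> unfolding S_def by blast
    have "(n + 1) div 2 * card (QQ n k) \<le> card R + 1" using lower[OF R] by (simp add: mult.commute)
    then show ?thesis using y by arith
  qed
  have "Min S = ((n + 1) div 2) * card (QQ n k) - 1" by (rule Min_eqI[OF fS lb inS])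
  then show ?thesis unfolding sdim_def S_def[symmetric] using N by simp
qed

end

theorem theorem5:
  fixes n k :: nat
  assumes "n \<ge> 3" and "k \<ge> 2"
  shows "sdim (lcg_V n k) (lcg_adj n k) = ((n + 1) div 2) * n * (n - 1) ^ (k - 2) - 1"
  using main[OF assms] .

end
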